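(* For any instance of CAP with $m$ items, let $k$ be the maximum utilitarian social welfare $\sum_{i\in N}v_i(A_i)$ over all contiguous allocations $\mathbf A$. Then $k\ge\sqrt m$.
   Context: An instance of CAP consists of agents $N=[n]$ and indivisible items $M=\{g_1,\dots,g_m\}$ arranged on a path in index order; each agent $i$ has an additive valuation $v_i:2^M\to\mathbb{Z}_{\ge0}$ (nonnegative integer values), and every item $g$ satisfies $v_i(\{g\})\ge1$ for some agent $i$. An allocation $(A_1,\dots,A_n)$ is a partition of $M$ into possibly empty bundles; it is contiguous if each nonempty $A_i$ is a set of consecutive items $\{g_k,\dots,g_\ell\}$ (no order on agents is imposed). *)

theory Defs
  imports Complex_Main
begin

text \<open>Agents are 0..<n, items g_1..g_m are 0..<m in path order.
  A valuation profile v i g is the (nonnegative integer) value of agent i for item g;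
  bundle values are additive.\<close>

definition bundle_value :: "(nat \<Rightarrow> nat \<Rightarrow> nat) \<Rightarrow> nat \<Rightarrow> nat set \<Rightarrow> nat" where
  "bundle_value v i S = (\<Sum>g\<in>S. v i g)"

definition is_allocation :: "nat \<Rightarrow> nat \<Rightarrow> (nat \<Rightarrow> nat set) \<Rightarrow> bool" where
  "is_allocation n m A \<longleftrightarrow>
     (\<forall>i<n. A i \<subseteq> {..<m}) \<and>
     (\<forall>i<n. \<forall>j<n. i \<noteq> j \<longrightarrow> A i \<inter> A j = {}) \<and>
     (\<Union>i<n. A i) = {..<m}"

definition is_contiguous_allocation :: "nat \<Rightarrow> nat \<Rightarrow> (nat \<Rightarrow> nat set) \<Rightarrow> bool" where
  "is_contiguous_allocation n m A \<longleftrightarrow>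
     is_allocation n m A \<and>
     (\<forall>i<n. A i = {} \<or> (\<exists>k l. k \<le> l \<and> A i = {k..l}))"

definition utilitarian_welfare :: "nat \<Rightarrow> (nat \<Rightarrow> nat \<Rightarrow> nat) \<Rightarrow> (nat \<Rightarrow> nat set) \<Rightarrow> nat" where
  "utilitarian_welfare n v A = (\<Sum>i<n. bundle_value v i (A i))"

definition max_contiguous_welfare :: "nat \<Rightarrow> nat \<Rightarrow> (nat \<Rightarrow> nat \<Rightarrow> nat) \<Rightarrow> nat" where
  "max_contiguous_welfare n m v =
     Max {utilitarian_welfare n v A | A. is_contiguous_allocation n m A}"

end

theory Submission
  imports Defs
begin

lemma welfare_insert:
  assumes "i < n" "m \<notin> A i" "finite (A i)"
  shows "utilitarian_welfare n v (A(i := insert m (A i))) = utilitarian_welfare n v A + v i m"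
proof -
  have "utilitarian_welfare n v (A(i := insert m (A i)))
      = bundle_value v i (insert m (A i)) + (\<Sum>j\<in>{..<n}-{i}. bundle_value v j (A j))"
    unfolding utilitarian_welfare_def using assms(1)
    by (subst sum.remove[of _ i]) (auto intro!: sum.cong)
  also have "\<dots> = v i m + bundle_value v i (A i) + (\<Sum>j\<in>{..<n}-{i}. bundle_value v j (A j))"
    using assms by (simp add: bundle_value_def)
  also have "\<dots> = v i m + utilitarian_welfare n v A"
    unfolding utilitarian_welfare_def using assms(1)
    by (subst (2) sum.remove[of _ i]) auto
  finally show ?thesis by simp
qed

lemma contig_insert:
  assumes "is_contiguous_allocation n m A" "i < n" "k \<le> m" "insert m (A i) = {k..m}"
  shows "is_contiguous_allocation n (Suc m) (A(i := insert m (A i)))"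
proof -
  have sub: "\<forall>j<n. A j \<subseteq> {..<m}" and dis: "\<forall>j<n. \<forall>l<n. j \<noteq> l \<longrightarrow> A j \<inter> A l = {}"
    and un: "(\<Union>j<n. A j) = {..<m}" and c: "\<forall>j<n. A j = {} \<or> (\<exists>k l. k \<le> l \<and> A j = {k..l})"
    using assms(1) unfolding is_contiguous_allocation_def is_allocation_def by auto
  have "(\<Union>j<n. (A(i := insert m (A i))) j) = insert m (\<Union>j<n. A j)"
    using assms(2) by (auto split: if_splits)
  also have "\<dots> = {..<Suc m}" using un by auto
  finally have u: "(\<Union>j<n. (A(i := insert m (A i))) j) = {..<Suc m}" .
  show ?thesis
    unfolding is_contiguous_allocation_def is_allocation_def
  proof (intro conjI allI impI)
    fix j assume "j < n" then show "(A(i := insert m (A i))) j \<subseteq> {..<Suc m}"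
      using sub by (auto simp: subset_iff less_Suc_eq)
  next
    fix j l assume "j < n" "l < n" "j \<noteq> l"
    then show "(A(i := insert m (A i))) j \<inter> (A(i := insert m (A i))) l = {}"
    proof (cases "j = i \<or> l = i")
      case True
      have "m \<notin> A j" "m \<notin> A l" using sub \<open>j<n\<close> \<open>l<n\<close> by auto
      then show ?thesis using True dis \<open>j<n\<close> \<open>l<n\<close> \<open>j\<noteq>l\<close> by auto
    next
      case False
      then show ?thesis using dis \<open>j<n\<close> \<open>l<n\<close> \<open>j\<noteq>l\<close> by simp
    qed
  next
    show "(\<Union>j<n. (A(i := insert m (A i))) j) = {..<Suc m}" by (rule u)
  next
    fix j assume "j < n" then show "(A(i := insert m (A i))) j = {} \<or> (\<exists>k l. k \<le> l \<and> (A(i := insert m (A i))) j = {k..l})"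
      using c assms(3,4) by auto
  qed
qed

lemma distinct_likers:
  assumes "\<forall>g<m. f g < n \<and> 1 \<le> v (f g) g"
  shows "\<exists>A. is_contiguous_allocation n m A \<and> (\<forall>i. A i \<noteq> {} \<longrightarrow> i \<in> f ` {..<m})
           \<and> card (f ` {..<m}) \<le> utilitarian_welfare n v A"
  using assms
proof (induction m)
  case 0
  show ?case
    by (rule exI[of _ "\<lambda>_. {}"]) (auto simp: is_contiguous_allocation_def is_allocation_def)
next
  case (Suc m)
  then obtain A where A: "is_contiguous_allocation n m A" "\<forall>i. A i \<noteq> {} \<longrightarrow> i \<in> f ` {..<m}"
    "card (f ` {..<m}) \<le> utilitarian_welfare n v A" by auto
  have sub: "\<forall>j<n. A j \<subseteq> {..<m}" and un: "(\<Union>j<n. A j) = {..<m}"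
    and c: "\<forall>j<n. A j = {} \<or> (\<exists>k l. k \<le> l \<and> A j = {k..l})"
    using A(1) unfolding is_contiguous_allocation_def is_allocation_def by auto
  have fm: "f m < n" "1 \<le> v (f m) m" using Suc.prems by auto
  have img: "f ` {..<Suc m} = insert (f m) (f ` {..<m})" by (auto simp: lessThan_Suc)
  show ?case
  proof (cases "f m \<in> f ` {..<m}")
    case True
    then have "m > 0" by auto
    then have "m - 1 \<in> (\<Union>j<n. A j)" using un by auto
    then obtain i where i: "i < n" "m - 1 \<in> A i" by auto
    then obtain k l where kl: "k \<le> l" "A i = {k..l}" using c by blast
    have "l \<in> A i" using kl by auto
    then have "l < m" using sub i by auto
    with i kl \<open>m>0\<close> have l: "l = m - 1" by auto
    have ins: "insert m (A i) = {k..m}" using kl l \<open>m>0\<close> by auto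
    have km: "k \<le> m" using kl l by auto
    have nm: "m \<notin> A i" using sub i by auto
    have fin: "finite (A i)" using kl by auto
    show ?thesis
    proof (intro exI conjI)
      show "is_contiguous_allocation n (Suc m) (A(i := insert m (A i)))"
        by (rule contig_insert[OF A(1) i(1) km ins])
      show "\<forall>j. (A(i := insert m (A i))) j \<noteq> {} \<longrightarrow> j \<in> f ` {..<Suc m}"
        using A(2) i by (auto simp: img)
      show "card (f ` {..<Suc m}) \<le> utilitarian_welfare n v (A(i := insert m (A i)))"
        using welfare_insert[of i n m A v, OF i(1) nm fin] A(3) True img by (simp add: insert_absorb)
    qed
  next
    case False
    then have e: "A (f m) = {}" using A(2) by auto
    have ins: "insert m (A (f m)) = {m..m}" using e by auto
    show ?thesis
    proof (intro exI conjI)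
      show "is_contiguous_allocation n (Suc m) (A(f m := insert m (A (f m))))"
        by (rule contig_insert[OF A(1) fm(1) le_refl ins])
      show "\<forall>j. (A(f m := insert m (A (f m)))) j \<noteq> {} \<longrightarrow> j \<in> f ` {..<Suc m}"
        using A(2) by (auto simp: img)
      show "card (f ` {..<Suc m}) \<le> utilitarian_welfare n v (A(f m := insert m (A (f m))))"
        using welfare_insert[OF fm(1), of m A v] e A(3) False img fm(2) by simp
    qed
  qed
qed

lemma welfare_bound:
  assumes "is_contiguous_allocation n m A"
  shows "utilitarian_welfare n v A \<le> (\<Sum>i<n. \<Sum>g<m. v i g)"
proof -
  have "\<forall>j<n. A j \<subseteq> {..<m}" using assms unfolding is_contiguous_allocation_def is_allocation_def by auto
  then show ?thesis unfolding utilitarian_welfare_def bundle_value_def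
    by (intro sum_mono sum_mono2) auto
qed

lemma max_ge:
  assumes "is_contiguous_allocation n m A"
  shows "utilitarian_welfare n v A \<le> max_contiguous_welfare n m v"
proof -
  let ?S = "{utilitarian_welfare n v A | A. is_contiguous_allocation n m A}"
  have "?S \<subseteq> {..(\<Sum>i<n. \<Sum>g<m. v i g)}" using welfare_bound by auto
  then have "finite ?S" using finite_subset by blast
  then show ?thesis unfolding max_contiguous_welfare_def using assms by (auto intro: Max_ge)
qed

theorem mainTheorem11:
  fixes n m :: nat and v :: "nat \<Rightarrow> nat \<Rightarrow> nat"
  assumes "\<forall>g<m. \<exists>i<n. v i g \<ge> 1"
  shows "sqrt (real m) \<le> real (max_contiguous_welfare n m v)"
proof (cases "m = 0")
  case True then show ?thesis by simp
next
  case False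
  from assms obtain f where f: "\<forall>g<m. f g < n \<and> 1 \<le> v (f g) g" by metis
  let ?k = "max_contiguous_welfare n m v"
  let ?L = "f ` {..<m}"
  define d where "d = card ?L"
  obtain A where "is_contiguous_allocation n m A" "d \<le> utilitarian_welfare n v A"
    using distinct_likers[of m f n v] f unfolding d_def by blast
  then have kd: "d \<le> ?k" using max_ge by (meson le_trans)
  define cnt where "cnt i = card {g\<in>{..<m}. f g = i}" for i
  have ne: "?L \<noteq> {}" using False by auto
  have finL: "finite ?L" by auto
  obtain i where iL: "i \<in> ?L" and imax: "\<forall>j\<in>?L. cnt j \<le> cnt i"
  proof -
    have "finite (cnt ` ?L)" "cnt ` ?L \<noteq> {}" using finL ne by auto
    then have "Max (cnt ` ?L) \<in> cnt ` ?L" by (rule Max_in)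
    then obtain i where "i \<in> ?L" "cnt i = Max (cnt ` ?L)" by (metis imageE)
    moreover have "\<forall>j\<in>?L. cnt j \<le> Max (cnt ` ?L)" using finL by auto
    ultimately show ?thesis using that by auto
  qed
  have "m = card {..<m}" by simp
  also have "\<dots> = card (\<Union>j\<in>?L. {g\<in>{..<m}. f g = j})"
    by (rule arg_cong[where f=card]) auto
  also have "\<dots> = (\<Sum>j\<in>?L. cnt j)" unfolding cnt_def
    by (rule card_UN_disjoint) auto
  also have "\<dots> \<le> d * cnt i" unfolding d_def using imax
    using sum_bounded_above[of ?L cnt "cnt i"] unfolding of_nat_id by blast
  finally have m_le: "m \<le> d * cnt i" .
  have i_n: "i < n" using iL f by auto
  define B where "B = (\<lambda>j. if j = i then {..<m} else ({}::nat set))"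
  have Bc: "is_contiguous_allocation n m B"
    unfolding is_contiguous_allocation_def is_allocation_def B_def
  proof (intro conjI allI impI)
    show "(\<Union>j<n. if j = i then {..<m} else {}) = {..<m}" using i_n by auto
  next
    fix j assume "j < n"
    show "(if j = i then {..<m} else {}) = {} \<or> (\<exists>k l. k \<le> l \<and> (if j = i then {..<m} else {}) = {k..l})"
    proof (cases "j = i")
      case True
      have "{..<m} = {0..m-1}" using False by auto
      then show ?thesis using True by auto
    qed simp
  qed auto
  have w1: "utilitarian_welfare n v B = bundle_value v i {..<m}"
    unfolding utilitarian_welfare_def B_def using i_n
    by (subst sum.remove[of _ i]) (auto simp: bundle_value_def)
  have w2: "(\<Sum>g\<in>{g\<in>{..<m}. f g = i}. v i g) \<le> bundle_value v i {..<m}" unfolding bundle_value_def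
    by (rule sum_mono2) auto
  have w3: "(\<Sum>g\<in>{g\<in>{..<m}. f g = i}. (1::nat)) \<le> (\<Sum>g\<in>{g\<in>{..<m}. f g = i}. v i g)"
    using f by (intro sum_mono) auto
  have "cnt i \<le> utilitarian_welfare n v B" unfolding cnt_def using w1 w2 w3 by simp
  then have ki: "cnt i \<le> ?k" using max_ge[OF Bc, of v] by linarith
  have "m \<le> ?k * ?k" using m_le kd ki by (meson le_trans mult_le_mono)
  then have "real m \<le> real ?k ^ 2" by (simp add: power2_eq_square of_nat_mult[symmetric] del: of_nat_mult)
  then have "sqrt (real m) \<le> sqrt (real ?k ^ 2)" by (rule real_sqrt_le_mono)
  then show ?thesis by simp
qed

end
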